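(* Let $(P+Q,\omega)$ be a labeled disjoint sum of posets and fix $s\in P$ such that $\omega(s) > \omega(t)$ for all $t\in Q$. Let $|P+Q|=n$ and $|P|=p$. Then \[ e_q^{\mathrm{maj}}(P+Q,\omega;s) = \binom{n-1}{p-1}_{q}\, e_q^{\mathrm{maj}}(P,\omega_1;s)\, e_q^{\mathrm{maj}}(Q,\omega_2), \] where $\omega_1,\omega_2$ are the restrictions of $\omega$ to $P$ and $Q$.
   Context: A labeled poset $(P,\omega)$ of size $n$ is a finite poset $P$ with a bijective labeling $\omega:P\to[n]$. For a linear extension $f:P\to[n]$ (an order-preserving bijection), the permutation $\omega\circ f^{-1}\in\mathfrak{S}_n$ is called a linear extension of the labeled poset; $\mathcal{L}(P,\omega)$ denotes the set of these. For $\sigma\in\mathfrak{S}_n$, $\mathrm{Des}(\sigma)=\{i\in[n-1]:\sigma_i>\sigma_{i+1}\}$ and $\mathrm{maj}(\sigma)=\sum_{i\in\mathrm{Des}(\sigma)} i$. Define $e_q^{\mathrm{maj}}(P,\omega)=\sum_{\sigma\in\mathcal{L}(P,\omega)}q^{\mathrm{maj}(\sigma)}$, and for fixed $s\in P$, $e_q^{\mathrm{maj}}(P,\omega;s)=\sum q^{\mathrm{maj}(\sigma)}$ summed over those $\sigma\in\mathcal{L}(P,\omega)$ that end with $\omega(s)$. Labels on $P$ and $Q$ are compared via the (order-preserving) relabelings induced by restricting $\omega$. The $q$-binomial coefficient is $\binom{m}{k}_q=\frac{[m]_q!}{[k]_q!\,[m-k]_q!}$ with $[m]_q=1+q+\cdots+q^{m-1}$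 and $[m]_q!=[m]_q\cdots[1]_q$. *)

theory Defs
  imports "HOL-Computational_Algebra.Polynomial"
begin

definition is_poset :: "'a set \<Rightarrow> ('a \<Rightarrow> 'a \<Rightarrow> bool) \<Rightarrow> bool" where
  "is_poset X le \<longleftrightarrow> finite X \<and> (\<forall>x\<in>X. le x x)
     \<and> (\<forall>x\<in>X. \<forall>y\<in>X. le x y \<and> le y x \<longrightarrow> x = y)
     \<and> (\<forall>x\<in>X. \<forall>y\<in>X. \<forall>z\<in>X. le x y \<and> le y z \<longrightarrow> le x z)"

definition is_labeled_poset :: "'a set \<Rightarrow> ('a \<Rightarrow> 'a \<Rightarrow> bool) \<Rightarrow> ('a \<Rightarrow> nat) \<Rightarrow> bool" where
  "is_labeled_poset X le \<omega> \<longleftrightarrow> is_poset X le \<and> bij_betw \<omega> X {1..card X}"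

text \<open>Order-preserving relabeling (standardization) of the restriction of \<omega> to Y.\<close>
definition restrict_label :: "('a \<Rightarrow> nat) \<Rightarrow> 'a set \<Rightarrow> 'a \<Rightarrow> nat" where
  "restrict_label \<omega> Y x = card {y\<in>Y. \<omega> y \<le> \<omega> x}"

text \<open>Linear extensions of the labeled poset (X, \<omega>): a linear extension f is
encoded by the list xs of elements in the order f^{-1}(1), ..., f^{-1}(n);
the corresponding permutation \<omega> \<circ> f^{-1} is the word map \<omega> xs.\<close>
definition lin_ext :: "'a set \<Rightarrow> ('a \<Rightarrow> 'a \<Rightarrow> bool) \<Rightarrow> ('a \<Rightarrow> nat) \<Rightarrow> nat list set" where
  "lin_ext X le \<omega> = {map \<omega> xs | xs. distinct xs \<and> set xs = X \<and>
      (\<forall>i<length xs. \<forall>j<length xs. le (xs ! i) (xs ! j) \<longrightarrow> i \<le> j)}"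

text \<open>Major index (positions are 1-based).\<close>
definition maj :: "nat list \<Rightarrow> nat" where
  "maj \<sigma> = (\<Sum>i\<in>{i. Suc i < length \<sigma> \<and> \<sigma> ! i > \<sigma> ! Suc i}. Suc i)"

definition e_maj :: "'a set \<Rightarrow> ('a \<Rightarrow> 'a \<Rightarrow> bool) \<Rightarrow> ('a \<Rightarrow> nat) \<Rightarrow> int poly" where
  "e_maj X le \<omega> = (\<Sum>\<sigma>\<in>lin_ext X le \<omega>. monom 1 (maj \<sigma>))"

definition e_maj_end :: "'a set \<Rightarrow> ('a \<Rightarrow> 'a \<Rightarrow> bool) \<Rightarrow> ('a \<Rightarrow> nat) \<Rightarrow> 'a \<Rightarrow> int poly" where
  "e_maj_end X le \<omega> s = (\<Sum>\<sigma>\<in>{\<sigma>\<in>lin_ext X le \<omega>. \<sigma> \<noteq> [] \<and> last \<sigma> = \<omega> s}. monom 1 (maj \<sigma>))"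

definition q_int :: "nat \<Rightarrow> int poly" where
  "q_int m = (\<Sum>j<m. monom 1 j)"

definition q_fact :: "nat \<Rightarrow> int poly" where
  "q_fact m = (\<Prod>i\<in>{1..m}. q_int i)"

definition q_binom :: "nat \<Rightarrow> nat \<Rightarrow> int poly" where
  "q_binom m k = q_fact m div (q_fact k * q_fact (m - k))"

end

theory Submission
  imports Defs
begin

lemma maj_snoc:
  "maj (\<sigma> @ [c]) = maj \<sigma> + (if \<sigma> \<noteq> [] \<and> last \<sigma> > c then length \<sigma> else 0)"
proof -
  have eq: "{i. Suc i < length (\<sigma> @ [c]) \<and> (\<sigma> @ [c]) ! i > (\<sigma> @ [c]) ! Suc i}
      = {i. Suc i < length \<sigma> \<and> \<sigma> ! i > \<sigma> ! Suc i} \<union>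
        (if \<sigma> \<noteq> [] \<and> last \<sigma> > c then {length \<sigma> - 1} else {})"
  proof (intro set_eqI iffI)
    fix i assume "i \<in> {i. Suc i < length (\<sigma> @ [c]) \<and> (\<sigma> @ [c]) ! i > (\<sigma> @ [c]) ! Suc i}"
    then have h: "Suc i < Suc (length \<sigma>)" "(\<sigma> @ [c]) ! i > (\<sigma> @ [c]) ! Suc i" by auto
    show "i \<in> {i. Suc i < length \<sigma> \<and> \<sigma> ! i > \<sigma> ! Suc i} \<union>
        (if \<sigma> \<noteq> [] \<and> last \<sigma> > c then {length \<sigma> - 1} else {})"
    proof (cases "Suc i < length \<sigma>")
      case True
      then show ?thesis using h by (auto simp: nth_append)
    next
      case False
      then have i: "i = length \<sigma> - 1" "\<sigma> \<noteq> []" using h by auto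
      then show ?thesis using h by (auto simp: nth_append last_conv_nth)
    qed
  next
    fix i assume "i \<in> {i. Suc i < length \<sigma> \<and> \<sigma> ! i > \<sigma> ! Suc i} \<union>
        (if \<sigma> \<noteq> [] \<and> last \<sigma> > c then {length \<sigma> - 1} else {})"
    then show "i \<in> {i. Suc i < length (\<sigma> @ [c]) \<and> (\<sigma> @ [c]) ! i > (\<sigma> @ [c]) ! Suc i}"
      by (auto simp: nth_append last_conv_nth split: if_splits)
  qed
  have fin: "finite {i. Suc i < length \<sigma> \<and> \<sigma> ! i > \<sigma> ! Suc i}"
    by (rule finite_subset[of _ "{..<length \<sigma>}"]) auto
  show ?thesis
    unfolding maj_def eq
    by (subst sum.union_disjoint) (use fin in auto)
qed

definition rmaj :: "('a \<Rightarrow> nat) \<Rightarrow> 'a list \<Rightarrow> nat" where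
  "rmaj f r = maj (map f (rev r))"

lemma rmaj_Nil[simp]: "rmaj f [] = 0"
  by (simp add: rmaj_def maj_def)

lemma rmaj_Cons:
  "rmaj f (c # r) = rmaj f r + (if r \<noteq> [] \<and> f (hd r) > f c then length r else 0)"
proof -
  have "rmaj f (c # r) = maj (map f (rev r) @ [f c])" by (simp add: rmaj_def)
  also have "\<dots> = rmaj f r + (if map f (rev r) \<noteq> [] \<and> last (map f (rev r)) > f c then length r else 0)"
    unfolding maj_snoc by (simp add: rmaj_def)
  also have "\<dots> = rmaj f r + (if r \<noteq> [] \<and> f (hd r) > f c then length r else 0)"
    by (cases "r = []") (auto simp: last_map last_rev)
  finally show ?thesis .
qed

lemma rmaj_cong:
  assumes "\<And>a b. a \<in> set r \<Longrightarrow> b \<in> set r \<Longrightarrow> (f a < f b) = (g a < g b)"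
  shows "rmaj f r = rmaj g r"
proof -
  have "{i. Suc i < length (map f (rev r)) \<and> map f (rev r) ! i > map f (rev r) ! Suc i}
      = {i. Suc i < length (map g (rev r)) \<and> map g (rev r) ! i > map g (rev r) ! Suc i}"
  proof (rule Collect_cong)
    fix i
    show "(Suc i < length (map f (rev r)) \<and> map f (rev r) ! i > map f (rev r) ! Suc i) =
          (Suc i < length (map g (rev r)) \<and> map g (rev r) ! i > map g (rev r) ! Suc i)"
    proof (cases "Suc i < length r")
      case True
      then have "rev r ! i \<in> set r" "rev r ! Suc i \<in> set r"
        using nth_mem[of i "rev r"] nth_mem[of "Suc i" "rev r"] by auto
      then show ?thesis using True assms by auto
    qed auto
  qed
  then show ?thesis by (simp add: rmaj_def maj_def)
qed

fun gb :: "nat \<Rightarrow> nat \<Rightarrow> int poly" where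
  "gb m 0 = 1"
| "gb 0 (Suc k) = 0"
| "gb (Suc m) (Suc k) = gb m k + monom 1 (Suc k) * gb m (Suc k)"

lemma gb_zero: "m < k \<Longrightarrow> gb m k = 0"
proof (induction m arbitrary: k)
  case 0
  then show ?case by (cases k) auto
next
  case (Suc m)
  then obtain k' where "k = Suc k'" by (cases k) auto
  then show ?case using Suc by simp
qed

lemma q_int_Suc: "q_int (Suc n) = q_int n + monom 1 n"
  by (simp add: q_int_def)

lemma q_int_add: "q_int (a + b) = q_int a + monom 1 a * q_int b"
  by (induction b) (simp_all add: q_int_Suc q_int_def[of 0] mult_monom algebra_simps)

lemma q_fact_0[simp]: "q_fact 0 = 1"
  by (simp add: q_fact_def)

lemma q_fact_Suc: "q_fact (Suc n) = q_fact n * q_int (Suc n)"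
  by (simp add: q_fact_def)

lemma q_int_nz: "q_int (Suc n) \<noteq> 0"
proof -
  have "coeff (q_int (Suc n)) 0 = 1"
    by (simp add: q_int_def coeff_sum coeff_monom)
  then show ?thesis by auto
qed

lemma q_fact_nz: "q_fact n \<noteq> 0"
  by (induction n) (simp_all add: q_fact_Suc q_int_nz)

lemma gb_fact: "k \<le> m \<Longrightarrow> gb m k * q_fact k * q_fact (m - k) = q_fact m"
proof (induction m arbitrary: k)
  case 0
  then show ?case by simp
next
  case (Suc m)
  show ?case
  proof (cases k)
    case 0
    then show ?thesis by simp
  next
    case (Suc k')
    show ?thesis
    proof (cases "k' = m")
      case True
      have "gb m m * q_fact m = q_fact m" using Suc.IH[of m] by simp
      then have "gb m m = 1" using q_fact_nz[of m]
        by (metis mult_cancel_right2)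
      then show ?thesis using True Suc by (simp add: gb_zero)
    next
      case False
      then have km: "k' < m" using Suc Suc.prems by simp
      obtain d where d: "m - k' = Suc d" using km by (metis Suc_diff_Suc)
      have md: "m - Suc k' = d" using d by simp
      have i1: "gb m k' * q_fact k' * q_fact (m - k') = q_fact m" using Suc.IH km by simp
      have i2: "gb m (Suc k') * q_fact (Suc k') * q_fact d = q_fact m" using Suc.IH[of "Suc k'"] km md by simp
      have "gb (Suc m) k * q_fact k * q_fact (Suc m - k)
          = (gb m k' + monom 1 (Suc k') * gb m (Suc k')) * q_fact (Suc k') * q_fact (m - k')"
        using Suc by simp
      also have "\<dots> = (gb m k' * q_fact k' * q_fact (m - k')) * q_int (Suc k')
           + monom 1 (Suc k') * (gb m (Suc k') * q_fact (Suc k') * q_fact d) * q_int (Suc d)"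
        by (simp add: d q_fact_Suc algebra_simps)
      also have "\<dots> = q_fact m * (q_int (Suc k') + monom 1 (Suc k') * q_int (Suc d))"
        using i1 i2 by (simp add: algebra_simps)
      also have "q_int (Suc k') + monom 1 (Suc k') * q_int (Suc d) = q_int (Suc m)"
      proof -
        have "Suc m = Suc k' + Suc d" using d km by simp
        then show ?thesis using q_int_add[of "Suc k'" "Suc d"] by simp
      qed
      finally show ?thesis by (simp add: q_fact_Suc)
    qed
  qed
qed

lemma q_binom_gb: "k \<le> m \<Longrightarrow> q_binom m k = gb m k"
proof -
  assume k: "k \<le> m"
  have "q_binom m k = (gb m k * (q_fact k * q_fact (m - k))) div (q_fact k * q_fact (m - k))"
    unfolding q_binom_def using gb_fact[OF k] by (simp add: mult.assoc)
  also have "\<dots> = gb m k"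
    by (rule nonzero_mult_div_cancel_right) (simp add: q_fact_nz)
  finally show ?thesis .
qed

lemma gb_sym: "k \<le> m \<Longrightarrow> gb m k = gb m (m - k)"
proof -
  assume k: "k \<le> m"
  have "gb m k * (q_fact k * q_fact (m - k)) = gb m (m - k) * (q_fact k * q_fact (m - k))"
    using gb_fact[OF k] gb_fact[of "m - k" m] k by (simp add: algebra_simps)
  then show ?thesis using q_fact_nz by (simp add: q_fact_nz)
qed

lemma gb_pascal2: "k \<le> m \<Longrightarrow> gb (Suc m) (Suc k) = gb m (Suc k) + monom 1 (m - k) * gb m k"
proof -
  assume k: "k \<le> m"
  show ?thesis
  proof (cases "k = m")
    case True
    have "gb m m = 1" using gb_sym[of m m] by simp
    then show ?thesis using True gb_sym[of "Suc m" "Suc m"] by (simp add: gb_zero)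
  next
    case False
    then obtain j where j: "m - k = Suc j" using k by (metis Suc_diff_Suc le_neq_implies_less)
    have "gb (Suc m) (Suc k) = gb (Suc m) (Suc j)" using gb_sym[of "Suc k" "Suc m"] k j by simp
    also have "\<dots> = gb m j + monom 1 (Suc j) * gb m (Suc j)" by simp
    also have "gb m j = gb m (Suc k)"
    proof -
      have "j \<le> m" "m - j = Suc k" using j k by auto
      then show ?thesis using gb_sym[of j m] by simp
    qed
    also have "gb m (Suc j) = gb m k" using gb_sym[of k m] j k by simp
    finally show ?thesis using j by simp
  qed
qed

definition FU :: "('a \<Rightarrow> nat) \<Rightarrow> 'a list \<Rightarrow> 'a list \<Rightarrow> int poly" where
  "FU f xs ys = (\<Sum>r\<in>shuffles (tl xs) ys. monom 1 (rmaj f (hd xs # r)))"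

lemma monom1_mult[simp]: "monom (1::int) i * monom 1 j = monom 1 (i + j)"
  by (simp add: mult_monom)

lemma monom1_mult2[simp]: "monom (1::int) i * (monom 1 j * p) = monom 1 (i + j) * p"
  by (simp add: mult.assoc[symmetric])

lemma FU_key:
  assumes "distinct (xs @ ys)" "inj_on f (set xs \<union> set ys)" "xs \<noteq> []"
  shows "FU f xs ys = monom 1 (rmaj f xs + rmaj f ys +
            (if ys \<noteq> [] \<and> f (hd xs) < f (hd ys) then length ys else 0))
          * gb (length xs - 1 + length ys) (length ys)"
  using assms
proof (induction "length xs + length ys" arbitrary: xs ys rule: less_induct)
  case less
  obtain x xs' where xs: "xs = x # xs'" using less.prems(3) by (cases xs) auto
  show ?case
  proof (cases "xs' = []")
    case True
    have "gb (length ys) (length ys) = 1" using gb_sym[of "length ys" "length ys"] by simp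
    then show ?thesis using True by (simp add: xs FU_def rmaj_Cons)
  next
    case False
    then obtain z xs'' where xs': "xs' = z # xs''" by (cases xs') auto
    show ?thesis
    proof (cases "ys = []")
      case True
      then show ?thesis by (simp add: xs FU_def)
    next
      case False
      then obtain y ys' where ys: "ys = y # ys'" by (cases ys) auto
      define a where "a = length xs'"
      define b where "b = length ys"
      define N where "N = a + b"
      have a1: "a \<ge> 1" and b1: "b \<ge> 1" using xs' ys by (auto simp: a_def b_def)
      have dist: "x \<noteq> y" "x \<noteq> z" "z \<noteq> y" using less.prems(1) xs xs' ys by auto
      have fx: "f x \<noteq> f y" "f x \<noteq> f z" "f z \<noteq> f y"
      proof -
        have mem: "x \<in> set xs \<union> set ys" "y \<in> set xs \<union> set ys" "z \<in> set xs \<union> set ys"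
          using xs xs' ys by auto
        show "f x \<noteq> f y" "f x \<noteq> f z" "f z \<noteq> f y"
          using inj_onD[OF less.prems(2)] mem dist by metis+
      qed
      have sh: "shuffles xs' ys = (#) z ` shuffles xs'' ys \<union> (#) y ` shuffles xs' ys'"
        using xs' ys by simp
      have disj: "(#) z ` shuffles xs'' ys \<inter> (#) y ` shuffles xs' ys' = {}" using dist by auto
      have "FU f xs ys = (\<Sum>r\<in>(#) z ` shuffles xs'' ys. monom (1::int) (rmaj f (x # r)))
          + (\<Sum>r\<in>(#) y ` shuffles xs' ys'. monom (1::int) (rmaj f (x # r)))"
        unfolding FU_def xs list.sel sh by (rule sum.union_disjoint) (use disj in auto)
      also have "(\<Sum>r\<in>(#) z ` shuffles xs'' ys. monom (1::int) (rmaj f (x # r)))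
          = (\<Sum>r\<in>shuffles xs'' ys. monom (1::int) (rmaj f (x # z # r)))"
        by (subst sum.reindex) auto
      also have "\<dots> = (\<Sum>r\<in>shuffles xs'' ys. monom (1::int) (if f z > f x then N else 0) * monom (1::int) (rmaj f (z # r)))"
        by (rule sum.cong) (auto simp: rmaj_Cons N_def a_def b_def xs' length_shuffles add_ac)
      also have "\<dots> = monom (1::int) (if f z > f x then N else 0) * FU f xs' ys"
        by (simp add: FU_def xs' sum_distrib_left)
      also have "(\<Sum>r\<in>(#) y ` shuffles xs' ys'. monom (1::int) (rmaj f (x # r)))
          = (\<Sum>r\<in>shuffles xs' ys'. monom (1::int) (rmaj f (x # y # r)))"
        by (subst sum.reindex) auto
      also have "\<dots> = (\<Sum>r\<in>shuffles ys' xs'. monom (1::int) (if f y > f x then N else 0) * monom (1::int) (rmaj f (y # r)))"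
        by (subst shuffles_commutes, rule sum.cong)
           (auto simp: rmaj_Cons N_def a_def b_def ys length_shuffles add_ac)
      also have "\<dots> = monom (1::int) (if f y > f x then N else 0) * FU f ys xs'"
        by (simp add: FU_def ys sum_distrib_left)
      finally have FUeq: "FU f xs ys = monom (1::int) (if f z > f x then N else 0) * FU f xs' ys
           + monom (1::int) (if f y > f x then N else 0) * FU f ys xs'" .
      have d1: "distinct (xs' @ ys)" "inj_on f (set xs' \<union> set ys)"
        using less.prems(1,2) xs by (auto intro: inj_on_subset)
      have d2: "distinct (ys @ xs')" "inj_on f (set ys \<union> set xs')"
        using less.prems(1,2) xs by (auto intro: inj_on_subset)
      have h1: "FU f xs' ys = monom 1 (rmaj f xs' + rmaj f ys +
            (if ys \<noteq> [] \<and> f (hd xs') < f (hd ys) then length ys else 0))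
          * gb (length xs' - 1 + length ys) (length ys)"
        by (rule less.hyps) (use d1 xs xs' in auto)
      have h2: "FU f ys xs' = monom 1 (rmaj f ys + rmaj f xs' +
            (if xs' \<noteq> [] \<and> f (hd ys) < f (hd xs') then length xs' else 0))
          * gb (length ys - 1 + length xs') (length xs')"
        by (rule less.hyps) (use d2 xs ys in auto)
      have e1: "length xs' - 1 + length ys = N - 1" "length ys = b" "length xs' = a"
        "length ys - 1 + length xs' = b - 1 + a" "hd xs' = z" "hd ys = y"
        using a1 b1 by (simp_all add: N_def a_def b_def xs' ys)
      have IH1: "FU f xs' ys = monom 1 (rmaj f xs' + rmaj f ys +
            (if f z < f y then b else 0)) * gb (N - 1) b"
        using h1 unfolding e1 using ys a1 by (simp add: N_def)
      have IH2': "FU f ys xs' = monom 1 (rmaj f ys + rmaj f xs' +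
            (if f y < f z then a else 0)) * gb (b - 1 + a) a"
        using h2 unfolding e1 using xs' by simp
      have "gb (b - 1 + a) a = gb (N - 1) (b - 1)"
        using gb_sym[of a "b - 1 + a"] a1 b1 by (simp add: N_def add.commute)
      then have IH2: "FU f ys xs' = monom (1::int) (rmaj f ys + rmaj f xs' +
            (if f y < f z then a else 0)) * gb (N - 1) (b - 1)"
        using IH2' by simp
      have rx: "rmaj f xs = rmaj f xs' + (if f z > f x then a else 0)"
        by (simp add: xs xs' rmaj_Cons a_def)
      have P1: "gb N b = gb (N - 1) (b - 1) + monom 1 b * gb (N - 1) b"
        using gb.simps(3)[of "N - 1" "b - 1"] a1 b1 by (simp add: N_def)
      have P2: "gb N b = gb (N - 1) b + monom 1 a * gb (N - 1) (b - 1)"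
        using gb_pascal2[of "b - 1" "N - 1"] a1 b1 by (simp add: N_def)
      have len: "length xs - 1 + length ys = N" "length ys = b"
        by (simp_all add: xs N_def a_def b_def)
      define m where "m = rmaj f xs' + rmaj f ys"
      define A where "A = gb (N - 1) (b - 1)"
      define B where "B = gb (N - 1) b"
      have P1': "gb N b = A + monom 1 b * B" using P1 by (simp add: A_def B_def)
      have P2': "gb N b = B + monom 1 a * A" using P2 by (simp add: A_def B_def)
      have Nab: "N = a + b" by (simp add: N_def)
      have P1'': "gb (a + b) b = A + monom 1 b * B" using P1' Nab by simp
      have P2'': "gb (a + b) b = B + monom 1 a * A" using P2' Nab by simp
      have core: "monom 1 (if f z > f x then N else 0) * (monom 1 (m + (if f z < f y then b else 0)) * B)
          + monom 1 (if f y > f x then N else 0) * (monom 1 (m + (if f y < f z then a else 0)) * A)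
          = monom (1::int) (m + (if f z > f x then a else 0) + (if f x < f y then b else 0)) * gb N b"
        unfolding Nab
        apply (cases "f x < f y"; cases "f x < f z"; cases "f z < f y")
        apply (use fx in \<open>((simp add: P1'' distrib_left add_ac; fail) | (simp add: P2'' distrib_left add_ac))\<close>)+
        done
      have core2: "FU f xs ys = monom 1 (if f z > f x then N else 0) * (monom 1 (m + (if f z < f y then b else 0)) * B)
          + monom 1 (if f y > f x then N else 0) * (monom 1 (m + (if f y < f z then a else 0)) * A)"
        unfolding FUeq IH1 IH2 m_def A_def B_def by (simp only: add.commute)
      have fin: "FU f xs ys = monom (1::int) (m + (if f z > f x then a else 0) + (if f x < f y then b else 0)) * gb N b"
        using core2 core by (rule trans)
      have ex: "rmaj f xs + rmaj f ys + (if ys \<noteq> [] \<and> f (hd xs) < f (hd ys) then length ys else 0)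
          = m + (if f z > f x then a else 0) + (if f x < f y then b else 0)"
        using rx by (simp add: m_def ys b_def xs)
      show ?thesis
        by (subst ex, subst len(1), subst len(2), rule fin)
    qed
  qed
qed

definition RLE :: "'a set \<Rightarrow> ('a \<Rightarrow> 'a \<Rightarrow> bool) \<Rightarrow> 'a list set" where
  "RLE X le = {r. distinct r \<and> set r = X \<and> sorted_wrt (\<lambda>a b. \<not> le a b) r}"

lemma cond_iff:
  "(\<forall>i<length xs. \<forall>j<length xs. le (xs ! i) (xs ! j) \<longrightarrow> i \<le> j)
    \<longleftrightarrow> sorted_wrt (\<lambda>a b. \<not> le b a) xs"
  unfolding sorted_wrt_iff_nth_less
proof (intro iffI allI impI)
  fix i j assume H: "\<forall>i<length xs. \<forall>j<length xs. le (xs ! i) (xs ! j) \<longrightarrow> i \<le> j"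
    and ij: "i < j" "j < length xs"
  show "\<not> le (xs ! j) (xs ! i)"
  proof
    assume "le (xs ! j) (xs ! i)"
    then have "j \<le> i" using H ij by auto
    then show False using ij by simp
  qed
next
  fix i j assume H: "\<forall>i j. i < j \<longrightarrow> j < length xs \<longrightarrow> \<not> le (xs ! j) (xs ! i)"
    and ij: "i < length xs" "j < length xs" "le (xs ! i) (xs ! j)"
  show "i \<le> j"
  proof (rule ccontr)
    assume "\<not> i \<le> j"
    then have "j < i" by simp
    then show False using H ij by blast
  qed
qed

lemma lin_ext_RLE: "lin_ext X le \<omega> = (\<lambda>r. map \<omega> (rev r)) ` RLE X le"
proof (intro set_eqI iffI)
  fix \<sigma> assume "\<sigma> \<in> lin_ext X le \<omega>"
  then obtain xs where xs: "\<sigma> = map \<omega> xs" "distinct xs" "set xs = X"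
    "\<forall>i<length xs. \<forall>j<length xs. le (xs ! i) (xs ! j) \<longrightarrow> i \<le> j"
    unfolding lin_ext_def by blast
  then have "rev xs \<in> RLE X le"
    unfolding RLE_def cond_iff by (simp add: sorted_wrt_rev)
  then show "\<sigma> \<in> (\<lambda>r. map \<omega> (rev r)) ` RLE X le" using xs(1) by force
next
  fix \<sigma> assume "\<sigma> \<in> (\<lambda>r. map \<omega> (rev r)) ` RLE X le"
  then obtain r where r: "\<sigma> = map \<omega> (rev r)" "r \<in> RLE X le" by blast
  then have "distinct (rev r) \<and> set (rev r) = X \<and>
     (\<forall>i<length (rev r). \<forall>j<length (rev r). le (rev r ! i) (rev r ! j) \<longrightarrow> i \<le> j)"
    unfolding cond_iff RLE_def by (simp add: sorted_wrt_rev)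
  then show "\<sigma> \<in> lin_ext X le \<omega>" unfolding lin_ext_def using r(1) by blast
qed

lemma finite_RLE: "finite X \<Longrightarrow> finite (RLE X le)"
proof -
  assume fin: "finite X"
  have "RLE X le \<subseteq> {xs. set xs \<subseteq> X \<and> length xs \<le> card X}"
  proof
    fix r assume "r \<in> RLE X le"
    then have "distinct r" "set r = X" by (auto simp: RLE_def)
    then show "r \<in> {xs. set xs \<subseteq> X \<and> length xs \<le> card X}"
      using distinct_card[of r] by simp
  qed
  then show ?thesis using finite_lists_length_le[OF fin] by (rule finite_subset)
qed

lemma inj_RLE: "inj_on \<omega> X \<Longrightarrow> inj_on (\<lambda>r. map \<omega> (rev r)) (RLE X le)"
proof (rule inj_onI)
  fix r1 r2 assume inj: "inj_on \<omega> X" and r: "r1 \<in> RLE X le" "r2 \<in> RLE X le"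
    and eq: "map \<omega> (rev r1) = map \<omega> (rev r2)"
  have "rev r1 = rev r2"
    by (rule map_inj_on[OF eq]) (use inj r in \<open>auto simp: RLE_def\<close>)
  then show "r1 = r2" by simp
qed

lemma e_maj_RLE:
  assumes "inj_on \<omega> X"
  shows "e_maj X le \<omega> = (\<Sum>r\<in>RLE X le. monom 1 (rmaj \<omega> r))"
  unfolding e_maj_def lin_ext_RLE
  by (subst sum.reindex[OF inj_RLE[OF assms]]) (simp add: rmaj_def)

lemma e_maj_end_RLE:
  assumes inj: "inj_on \<omega> X" and s: "s \<in> X"
  shows "e_maj_end X le \<omega> s = (\<Sum>r\<in>{r\<in>RLE X le. r \<noteq> [] \<and> hd r = s}. monom 1 (rmaj \<omega> r))"
proof -
  have "{\<sigma>\<in>lin_ext X le \<omega>. \<sigma> \<noteq> [] \<and> last \<sigma> = \<omega> s}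
      = (\<lambda>r. map \<omega> (rev r)) ` {r\<in>RLE X le. r \<noteq> [] \<and> hd r = s}"
  proof -
    have "\<And>r. r \<in> RLE X le \<Longrightarrow> r \<noteq> [] \<Longrightarrow> (\<omega> (hd r) = \<omega> s) = (hd r = s)"
      using inj s by (auto simp: RLE_def dest: inj_onD)
    then show ?thesis
      unfolding lin_ext_RLE by (auto simp: last_map last_rev)
  qed
  moreover have "inj_on (\<lambda>r. map \<omega> (rev r)) {r\<in>RLE X le. r \<noteq> [] \<and> hd r = s}"
    by (rule inj_on_subset[OF inj_RLE[OF inj]]) auto
  ultimately show ?thesis
    unfolding e_maj_end_def by (simp add: sum.reindex rmaj_def)
qed

lemma rl_mono:
  assumes inj: "inj_on \<omega> P" and fin: "finite P" and a: "a \<in> P" and b: "b \<in> P"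
  shows "(restrict_label \<omega> P a < restrict_label \<omega> P b) = (\<omega> a < \<omega> b)"
proof (cases "\<omega> a < \<omega> b")
  case True
  have "b \<notin> {y\<in>P. \<omega> y \<le> \<omega> a}" "b \<in> {y\<in>P. \<omega> y \<le> \<omega> b}" using True b by auto
  moreover have "{y\<in>P. \<omega> y \<le> \<omega> a} \<subseteq> {y\<in>P. \<omega> y \<le> \<omega> b}" using True by auto
  ultimately have "{y\<in>P. \<omega> y \<le> \<omega> a} \<subset> {y\<in>P. \<omega> y \<le> \<omega> b}" by blast
  then have "card {y\<in>P. \<omega> y \<le> \<omega> a} < card {y\<in>P. \<omega> y \<le> \<omega> b}"
    by (rule psubset_card_mono[rotated]) (use fin in auto)
  then show ?thesis using True by (simp add: restrict_label_def)
next
  case False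
  have "{y\<in>P. \<omega> y \<le> \<omega> b} \<subseteq> {y\<in>P. \<omega> y \<le> \<omega> a}" using False by auto
  then have "card {y\<in>P. \<omega> y \<le> \<omega> b} \<le> card {y\<in>P. \<omega> y \<le> \<omega> a}"
    by (rule card_mono[rotated]) (use fin in auto)
  then show ?thesis using False by (simp add: restrict_label_def)
qed

lemma rl_inj:
  assumes inj: "inj_on \<omega> P" and fin: "finite P"
  shows "inj_on (restrict_label \<omega> P) P"
proof (rule inj_onI)
  fix a b assume a: "a \<in> P" and b: "b \<in> P" and eq: "restrict_label \<omega> P a = restrict_label \<omega> P b"
  then have "\<not> \<omega> a < \<omega> b" "\<not> \<omega> b < \<omega> a" using rl_mono[OF inj fin a b] rl_mono[OF inj fin b a] by auto
  then have "\<omega> a = \<omega> b" by simp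
  then show "a = b" using inj a b by (auto dest: inj_onD)
qed

lemma rmaj_rl:
  assumes inj: "inj_on \<omega> P" and fin: "finite P" and r: "set r \<subseteq> P"
  shows "rmaj (restrict_label \<omega> P) r = rmaj \<omega> r"
  by (rule rmaj_cong) (use rl_mono[OF inj fin] r in auto)

lemma sorted_shuffles:
  "zs \<in> shuffles xs ys \<Longrightarrow> sorted_wrt R xs \<Longrightarrow> sorted_wrt R ys \<Longrightarrow>
   (\<forall>a\<in>set xs. \<forall>b\<in>set ys. R a b \<and> R b a) \<Longrightarrow> sorted_wrt R zs"
proof (induction xs ys arbitrary: zs rule: shuffles.induct)
  case (3 x xs y ys)
  have cr: "\<And>a b. a \<in> set (x # xs) \<Longrightarrow> b \<in> set (y # ys) \<Longrightarrow> R a b \<and> R b a"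
    using "3.prems"(4) by blast
  have sx: "sorted_wrt R xs" "\<And>b. b \<in> set xs \<Longrightarrow> R x b" using "3.prems"(2) by auto
  have sy: "sorted_wrt R ys" "\<And>b. b \<in> set ys \<Longrightarrow> R y b" using "3.prems"(3) by auto
  have "zs \<in> (#) x ` shuffles xs (y # ys) \<union> (#) y ` shuffles (x # xs) ys" using "3.prems"(1) by simp
  then show ?case
  proof (elim UnE)
    assume "zs \<in> (#) x ` shuffles xs (y # ys)"
    then obtain zs' where zs: "zs = x # zs'" "zs' \<in> shuffles xs (y # ys)" by blast
    have "sorted_wrt R zs'"
      by (rule "3.IH"(1)[OF zs(2) sx(1) "3.prems"(3)]) (use cr in simp)
    moreover have "\<forall>b\<in>set zs'. R x b"
    proof
      fix b assume "b \<in> set zs'"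
      then have "b \<in> set xs \<or> b \<in> set (y # ys)" using set_shuffles[OF zs(2)] by blast
      then show "R x b" using sx(2) cr[of x b] by auto
    qed
    ultimately show ?thesis using zs by simp
  next
    assume "zs \<in> (#) y ` shuffles (x # xs) ys"
    then obtain zs' where zs: "zs = y # zs'" "zs' \<in> shuffles (x # xs) ys" by blast
    have "sorted_wrt R zs'"
      by (rule "3.IH"(2)[OF zs(2) "3.prems"(2) sy(1)]) (use cr in simp)
    moreover have "\<forall>b\<in>set zs'. R y b"
    proof
      fix b assume "b \<in> set zs'"
      then have "b \<in> set ys \<or> b \<in> set (x # xs)" using set_shuffles[OF zs(2)] by blast
      then show "R y b" using sy(2) cr[of b y] by auto
    qed
    ultimately show ?thesis using zs by simp
  qed
qed simp_all

theorem corollary3p5: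
  fixes P Q :: "'a set" and le :: "'a \<Rightarrow> 'a \<Rightarrow> bool" and \<omega> :: "'a \<Rightarrow> nat"
    and s :: 'a and n p :: nat
  assumes disj: "P \<inter> Q = {}"
    and lp: "is_labeled_poset (P \<union> Q) le \<omega>"
    and sum: "\<forall>x\<in>P. \<forall>y\<in>Q. \<not> le x y \<and> \<not> le y x"
    and sP: "s \<in> P"
    and big: "\<forall>t\<in>Q. \<omega> s > \<omega> t"
    and n: "n = card (P \<union> Q)"
    and p: "p = card P"
  shows "e_maj_end (P \<union> Q) le \<omega> s =
           q_binom (n - 1) (p - 1) * e_maj_end P le (restrict_label \<omega> P) s
             * e_maj Q le (restrict_label \<omega> Q)"
proof -
  define X where "X = P \<union> Q"
  have finX: "finite X" using lp by (simp add: is_labeled_poset_def is_poset_def X_def)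
  have injX: "inj_on \<omega> X" using lp unfolding is_labeled_poset_def X_def by (auto intro: bij_betw_imp_inj_on)
  have finP: "finite P" and finQ: "finite Q" using finX by (auto simp: X_def)
  have injP: "inj_on \<omega> P" and injQ: "inj_on \<omega> Q" using injX by (auto simp: X_def intro: inj_on_subset)
  have sX: "s \<in> X" using sP by (simp add: X_def)
  have nc: "n = p + card Q" using n p card_Un_disjoint[OF finP finQ disj] by simp
  have "card P > 0" using finP sP card_gt_0_iff by blast
  then have p1: "p \<ge> 1" using p by simp
  define A where "A = {r\<in>RLE X le. r \<noteq> [] \<and> hd r = s}"
  define B1 where "B1 = {r\<in>RLE P le. r \<noteq> [] \<and> hd r = s}"
  define B2 where "B2 = RLE Q le"
  define key where "key r = (filter (\<lambda>x. x \<in> P) r, filter (\<lambda>x. x \<notin> P) r)" for r :: "'a list"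
  define G where "G = gb (n - 1) (n - p)"
  define g where "g r = (monom 1 (rmaj \<omega> r) :: int poly)" for r
  have finA: "finite A" using finite_RLE[OF finX] by (simp add: A_def)
  have finB: "finite (B1 \<times> B2)" using finite_RLE[OF finP] finite_RLE[OF finQ] by (simp add: B1_def B2_def)
  have R_cross: "\<And>a b. a \<in> P \<Longrightarrow> b \<in> Q \<Longrightarrow> \<not> le a b \<and> \<not> le b a" using sum by blast
  have keyimg: "key ` A \<subseteq> B1 \<times> B2"
  proof
    fix pr assume "pr \<in> key ` A"
    then obtain r where r: "r \<in> A" "pr = key r" by blast
    then have rr: "distinct r" "set r = P \<union> Q" "sorted_wrt (\<lambda>a b. \<not> le a b) r" "r \<noteq> []" "hd r = s"
      by (auto simp: A_def RLE_def X_def)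
    obtain r' where r': "r = s # r'" using rr(4,5) by (cases r) auto
    have "filter (\<lambda>x. x \<in> P) r \<in> B1"
      using rr r' sP by (auto simp: B1_def RLE_def sorted_wrt_filter)
    moreover have "filter (\<lambda>x. x \<notin> P) r \<in> B2"
      using rr disj by (auto simp: B2_def RLE_def sorted_wrt_filter)
    ultimately show "pr \<in> B1 \<times> B2" using r(2) by (simp add: key_def)
  qed
  have fiber: "{r\<in>A. key r = (us, vs)} = (#) s ` shuffles (tl us) vs"
    if us: "us \<in> B1" and vs: "vs \<in> B2" for us vs
  proof -
    have u: "distinct us" "set us = P" "sorted_wrt (\<lambda>a b. \<not> le a b) us" "us \<noteq> []" "hd us = s"
      using us by (auto simp: B1_def RLE_def)
    have v: "distinct vs" "set vs = Q" "sorted_wrt (\<lambda>a b. \<not> le a b) vs"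
      using vs by (auto simp: B2_def RLE_def)
    have us_eq: "us = s # tl us" using u(4,5) by (cases us) auto
    have svs: "s \<notin> set vs" using sP disj v(2) by auto
    show ?thesis
    proof (intro set_eqI iffI)
      fix r assume "r \<in> {r\<in>A. key r = (us, vs)}"
      then have r: "r \<in> A" "filter (\<lambda>x. x \<in> P) r = us" "filter (\<lambda>x. x \<notin> P) r = vs"
        by (auto simp: key_def)
      have "r \<noteq> []" "hd r = s" using r(1) by (auto simp: A_def)
      then obtain r' where r': "r = s # r'" by (cases r) auto
      have "r \<in> shuffles us vs" using partition_in_shuffles[of r "\<lambda>x. x \<in> P"] r(2,3) by simp
      then have "s # r' \<in> shuffles us vs" using r' by simp
      then have "r' \<in> shuffles (tl us) vs"
        unfolding Cons_in_shuffles_iff using svs by (auto dest: list.set_sel(1))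
      then show "r \<in> (#) s ` shuffles (tl us) vs" using r' by blast
    next
      fix r assume "r \<in> (#) s ` shuffles (tl us) vs"
      then obtain r' where r': "r = s # r'" "r' \<in> shuffles (tl us) vs" by blast
      have rs: "r \<in> shuffles us vs"
        using Cons_in_shuffles_leftI[OF r'(2), of s] r'(1) us_eq by simp
      have dj: "set us \<inter> set vs = {}" using u(2) v(2) disj by simp
      have "distinct r" by (rule distinct_disjoint_shuffles[OF u(1) v(1) dj rs])
      moreover have "set r = P \<union> Q" using set_shuffles[OF rs] u(2) v(2) by simp
      moreover have "sorted_wrt (\<lambda>a b. \<not> le a b) r"
        by (rule sorted_shuffles[OF rs u(3) v(3)]) (use u(2) v(2) R_cross in blast)
      moreover have "key r = (us, vs)"
        using filter_shuffles_disjoint1[OF dj rs] u(2) by (simp add: key_def)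
      ultimately show "r \<in> {r\<in>A. key r = (us, vs)}"
        using r'(1) by (simp add: A_def RLE_def X_def)
    qed
  qed
  have fibsum: "sum g ((#) s ` shuffles (tl us) vs) = monom 1 (rmaj \<omega> us + rmaj \<omega> vs) * G"
    if us: "us \<in> B1" and vs: "vs \<in> B2" for us vs
  proof -
    have u: "distinct us" "set us = P" "us \<noteq> []" "hd us = s"
      using us by (auto simp: B1_def RLE_def)
    have v: "distinct vs" "set vs = Q"
      using vs by (auto simp: B2_def RLE_def)
    have "sum g ((#) s ` shuffles (tl us) vs) = FU \<omega> us vs"
      unfolding FU_def u(4) by (subst sum.reindex) (auto simp: g_def)
    also have "\<dots> = monom 1 (rmaj \<omega> us + rmaj \<omega> vs +
            (if vs \<noteq> [] \<and> \<omega> (hd us) < \<omega> (hd vs) then length vs else 0))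
          * gb (length us - 1 + length vs) (length vs)"
      by (rule FU_key) (use u v disj injX in \<open>auto simp: X_def\<close>)
    also have "(if vs \<noteq> [] \<and> \<omega> (hd us) < \<omega> (hd vs) then length vs else 0) = 0"
    proof -
      have "vs \<noteq> [] \<Longrightarrow> \<omega> (hd vs) < \<omega> s" using big v(2) hd_in_set[of vs] by auto
      then show ?thesis using u(4) by auto
    qed
    also have "gb (length us - 1 + length vs) (length vs) = G"
    proof -
      have "length us = p" "length vs = card Q"
        using distinct_card[OF u(1)] distinct_card[OF v(1)] u(2) v(2) p by auto
      then show ?thesis using nc p1 by (simp add: G_def)
    qed
    finally show ?thesis by simp
  qed
  have "e_maj_end (P \<union> Q) le \<omega> s = sum g A"
    using e_maj_end_RLE[OF injX sX] by (simp add: X_def A_def g_def)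
  also have "\<dots> = (\<Sum>pr\<in>B1 \<times> B2. sum g {r\<in>A. key r = pr})"
    using sum.group[OF finA finB keyimg, of g] by simp
  also have "\<dots> = (\<Sum>(us, vs)\<in>B1 \<times> B2. monom 1 (rmaj \<omega> us) * monom 1 (rmaj \<omega> vs) * G)"
    by (rule sum.cong) (auto simp: fiber fibsum)
  also have "\<dots> = (\<Sum>us\<in>B1. \<Sum>vs\<in>B2. G * (monom 1 (rmaj \<omega> us) * monom 1 (rmaj \<omega> vs)))"
    unfolding sum.cartesian_product[symmetric] by (intro sum.cong refl) (simp only: mult.commute)
  also have "\<dots> = G * ((\<Sum>us\<in>B1. monom 1 (rmaj \<omega> us)) * (\<Sum>vs\<in>B2. monom 1 (rmaj \<omega> vs)))"
    by (subst sum_product) (simp only: sum_distrib_left)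
  also have "(\<Sum>us\<in>B1. monom 1 (rmaj \<omega> us)) = e_maj_end P le (restrict_label \<omega> P) s"
  proof -
    have "e_maj_end P le (restrict_label \<omega> P) s
        = (\<Sum>r\<in>B1. monom 1 (rmaj (restrict_label \<omega> P) r))"
      unfolding B1_def by (rule e_maj_end_RLE[OF rl_inj[OF injP finP] sP])
    also have "\<dots> = (\<Sum>us\<in>B1. monom 1 (rmaj \<omega> us))"
      by (rule sum.cong) (auto simp: B1_def RLE_def intro!: arg_cong[where f="monom 1"] rmaj_rl[OF injP finP])
    finally show ?thesis by simp
  qed
  also have "(\<Sum>vs\<in>B2. monom 1 (rmaj \<omega> vs)) = e_maj Q le (restrict_label \<omega> Q)"
  proof -
    have "e_maj Q le (restrict_label \<omega> Q) = (\<Sum>r\<in>B2. monom 1 (rmaj (restrict_label \<omega> Q) r))"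
      unfolding B2_def by (rule e_maj_RLE[OF rl_inj[OF injQ finQ]])
    also have "\<dots> = (\<Sum>vs\<in>B2. monom 1 (rmaj \<omega> vs))"
      by (rule sum.cong) (auto simp: B2_def RLE_def intro!: arg_cong[where f="monom 1"] rmaj_rl[OF injQ finQ])
    finally show ?thesis by simp
  qed
  also have "G = q_binom (n - 1) (p - 1)"
  proof -
    have "q_binom (n - 1) (p - 1) = gb (n - 1) (p - 1)" using nc p1 by (intro q_binom_gb) simp
    also have "\<dots> = gb (n - 1) (n - 1 - (p - 1))" using nc p1 by (intro gb_sym) simp
    also have "n - 1 - (p - 1) = n - p" using nc p1 by simp
    finally show ?thesis by (simp add: G_def)
  qed
  finally show ?thesis by (simp add: mult.assoc)
qed

end
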